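(* Let $U\in\mathbb{R}^{d\times n}$ be a frame, $z\in\mathbb{R}^n_{++}$, $T\subseteq[n]$, and $h:=h^{U,z}_T$. Then for any $1\le\alpha\le\alpha'$, \[\frac{\alpha}{\alpha'}(\alpha'-\alpha)h'(\alpha)\le h(\alpha')-h(\alpha)\le(\alpha'-\alpha)h'(\alpha).\] Equivalently, with the Bregman divergence $D(\beta\mid\alpha):=h'(\alpha)(\beta-\alpha)+h(\alpha)-h(\beta)$, \[0\le D(\alpha'\mid\alpha)\le\Big(\frac{\alpha'}{\alpha}-1\Big)(h(\alpha')-h(\alpha)).\]
   Context: A frame is a full row rank matrix $U\in\mathbb{R}^{d\times n}$; $Z=\mathrm{diag}(z)$; $U_T,Z_T$ restrictions to $T$; $\bar T=[n]\setminus T$. Progress function: $h^{U,z}_T(\alpha):=\mathrm{tr}[\alpha U_TZ_TU_T^{\mathsf T}(U_{\bar T}Z_{\bar T}U_{\bar T}^{\mathsf T}+\alpha U_TZ_TU_T^{\mathsf T})^{-1}]$ for $\alpha>0$. *)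

theory Defs
  imports "HOL-Analysis.Analysis"
begin

text \<open>Diagonal matrix Z_S = diag(z) restricted to the index set S (zero outside S), so that
  U ** restr_diag S z ** transpose U = U_S Z_S U_S^T.\<close>
definition restr_diag :: "'n set \<Rightarrow> real^'n \<Rightarrow> real^'n^'n" where
  "restr_diag S z = (\<chi> i j. if i = j \<and> i \<in> S then z $ i else 0)"

definition frame :: "real^'n^'d \<Rightarrow> bool" where
  "frame U \<longleftrightarrow> rank U = CARD('d)"

definition progress :: "real^'n^'d \<Rightarrow> real^'n \<Rightarrow> 'n set \<Rightarrow> real \<Rightarrow> real" where
  "progress U z T \<alpha> =
     trace ((\<alpha> *\<^sub>R (U ** restr_diag T z ** transpose U)) **
            matrix_inv (U ** restr_diag (- T) z ** transpose U
                        + \<alpha> *\<^sub>R (U ** restr_diag T z ** transpose U)))"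

end

theory Submission
  imports Defs
begin



lemma mm_add_r: "((X::real^'b^'a) + Y) ** (Z::real^'c^'b) = X ** Z + Y ** Z"
  by (vector matrix_matrix_mult_def sum.distrib distrib_right)
lemma mm_add_l: "(X::real^'b^'a) ** ((Y::real^'c^'b) + Z) = X ** Y + X ** Z"
  by (rule matrix_add_ldistrib)
lemma mm_diff_r: "((X::real^'b^'a) - Y) ** (Z::real^'c^'b) = X ** Z - Y ** Z"
  by (vector matrix_matrix_mult_def sum_subtractf left_diff_distrib)
lemma mm_diff_l: "(X::real^'b^'a) ** ((Y::real^'c^'b) - Z) = X ** Y - X ** Z"
  by (vector matrix_matrix_mult_def sum_subtractf right_diff_distrib)
lemma mm_scale_l: "(c *\<^sub>R (X::real^'b^'a)) ** (Y::real^'c^'b) = c *\<^sub>R (X ** Y)"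
  by (simp add: scalar_matrix_assoc)
lemma mm_scale_r: "(X::real^'b^'a) ** (c *\<^sub>R (Y::real^'c^'b)) = c *\<^sub>R (X ** Y)"
  by (simp add: matrix_scalar_ac scalar_matrix_assoc)
lemma trace_scale: "trace (c *\<^sub>R (X::real^'a^'a)) = c * trace X"
  by (simp add: trace_def sum_distrib_left)

definition psd :: "real^'a^'a \<Rightarrow> bool" where
  "psd M \<longleftrightarrow> (\<forall>w. 0 \<le> w \<bullet> (M *v w))"

lemma psd_congr:
  fixes G :: "real^'b^'a" and M :: "real^'a^'a"
  assumes "psd M" shows "psd (transpose G ** M ** G)"
  unfolding psd_def
proof
  fix w :: "real^'b"
  have "w \<bullet> ((transpose G ** M ** G) *v w) = w \<bullet> (transpose G *v (M *v (G *v w)))"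
    by (simp add: matrix_vector_mul_assoc matrix_mul_assoc)
  also have "\<dots> = (G *v w) \<bullet> (M *v (G *v w))"
    by (metis dot_lmul_matrix inner_commute transpose_matrix_vector)
  finally show "0 \<le> w \<bullet> ((transpose G ** M ** G) *v w)" using assms psd_def by metis
qed

lemma restr_diag_transpose: "transpose (restr_diag S z) = restr_diag S z"
  by (auto simp add: restr_diag_def transpose_def vec_eq_iff)

lemma fac_sym: "transpose (U ** restr_diag S z ** transpose U) = U ** restr_diag S z ** transpose U"
  by (simp add: matrix_transpose_mul restr_diag_transpose matrix_mul_assoc)

lemma quad_congr:
  fixes G :: "real^'b^'a" and M :: "real^'a^'a"
  shows "w \<bullet> ((transpose G ** M ** G) *v w) = (G *v w) \<bullet> (M *v (G *v w))"
proof -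
  have "w \<bullet> ((transpose G ** M ** G) *v w) = w \<bullet> (transpose G *v (M *v (G *v w)))"
    by (simp add: matrix_vector_mul_assoc matrix_mul_assoc)
  also have "\<dots> = (G *v w) \<bullet> (M *v (G *v w))"
    by (metis dot_lmul_matrix inner_commute transpose_matrix_vector)
  finally show ?thesis .
qed

lemma quad_diag:
  "v \<bullet> (restr_diag S z *v v) = (\<Sum>i\<in>UNIV. (if i \<in> S then z$i else 0) * (v$i)^2)"
proof -
  have "restr_diag S z *v v = (\<chi> i. (if i \<in> S then z$i else 0) * v$i)"
    by (auto simp add: restr_diag_def matrix_vector_mult_def vec_eq_iff if_distrib if_distribR cong: if_cong)
  then show ?thesis by (simp add: inner_vec_def power2_eq_square mult_ac)
qed

lemma quad_fac:
  fixes U :: "real^'n^'d"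
  shows "w \<bullet> ((U ** restr_diag S z ** transpose U) *v w)
     = (\<Sum>i\<in>UNIV. (if i \<in> S then z$i else 0) * ((transpose U *v w)$i)^2)"
  using quad_congr[where G="transpose U" and M="restr_diag S z" and w=w] by (simp add: quad_diag)

lemma fac_trace:
  fixes U :: "real^'n^'d"
  assumes "\<forall>i\<in>S. 0 \<le> z$i" and "psd M"
  shows "0 \<le> trace ((U ** restr_diag S z ** transpose U) ** M)"
proof -
  define W where "W = transpose U ** M ** U"
  have pW: "psd W" unfolding W_def by (rule psd_congr[OF assms(2)])
  have Wjj: "0 \<le> W$j$j" for j
  proof -
    have "W$j$j = axis j 1 \<bullet> (W *v axis j 1)"
      by (simp add: inner_vec_def matrix_vector_mult_def axis_def if_distrib if_distribR sum.delta cong: if_cong)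
    then show ?thesis using pW psd_def by metis
  qed
  have "trace ((U ** restr_diag S z ** transpose U) ** M) = trace (restr_diag S z ** W)"
    using trace_mul_sym[of U "restr_diag S z ** transpose U ** M"]
    by (simp add: W_def matrix_mul_assoc)
  also have "\<dots> = (\<Sum>j\<in>UNIV. (if j \<in> S then z$j else 0) * W$j$j)"
    by (auto simp add: trace_def matrix_matrix_mult_def restr_diag_def if_distrib if_distribR cong: if_cong intro!: sum.cong)
  also have "\<dots> \<ge> 0" using assms(1) Wjj by (intro sum_nonneg) auto
  finally show ?thesis .
qed




lemma transpose_add_scale: "transpose ((X::real^'a^'a) + c *\<^sub>R Y) = transpose X + c *\<^sub>R transpose Y"
  by (simp add: transpose_def vec_eq_iff)

lemma cont_det:
  fixes F :: "real \<Rightarrow> real^'a^'a"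
  assumes "\<And>i j. isCont (\<lambda>x. F x $ i $ j) a"
  shows "isCont (\<lambda>x. det (F x)) a"
  unfolding det_def by (intro continuous_intros assms)

locale AB =
  fixes A B :: "real^'d^'d"
  assumes symA: "transpose A = A" and symB: "transpose B = B"
    and trA: "\<And>M. psd M \<Longrightarrow> 0 \<le> trace (A ** M)"
    and trB: "\<And>M. psd M \<Longrightarrow> 0 \<le> trace (B ** M)"
    and psdA: "psd A" and psdB: "psd B"
    and invN: "\<And>\<beta>. \<beta> > 0 \<Longrightarrow> invertible (A + \<beta> *\<^sub>R B)"
begin

definition N where "N \<beta> = A + \<beta> *\<^sub>R B"
definition R where "R \<beta> = matrix_inv (N \<beta>)"
definition h where "h \<beta> = trace ((\<beta> *\<^sub>R B) ** matrix_inv (A + \<beta> *\<^sub>R B))"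

lemma NR_RN: assumes "\<beta> > 0" shows "N \<beta> ** R \<beta> = mat 1" "R \<beta> ** N \<beta> = mat 1"
proof -
  have "\<exists>A'. N \<beta> ** A' = mat 1 \<and> A' ** N \<beta> = mat 1"
    using invN[OF assms] unfolding invertible_def N_def by blast
  from someI_ex[OF this] show "N \<beta> ** R \<beta> = mat 1" "R \<beta> ** N \<beta> = mat 1"
    unfolding R_def matrix_inv_def by auto
qed

lemma symN: "transpose (N \<beta>) = N \<beta>"
  by (simp add: N_def transpose_add_scale symA symB)

lemma symR: assumes "\<beta> > 0" shows "transpose (R \<beta>) = R \<beta>"
proof -
  have "transpose (R \<beta>) ** N \<beta> = mat 1"
    using arg_cong[OF NR_RN(1)[OF assms], of transpose]
    by (simp add: matrix_transpose_mul symN)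
  then have "transpose (R \<beta>) = transpose (R \<beta>) ** (N \<beta> ** R \<beta>)"
    using NR_RN[OF assms] by simp
  also have "\<dots> = R \<beta>"
    by (simp add: matrix_mul_assoc \<open>transpose (R \<beta>) ** N \<beta> = mat 1\<close>)
  finally show ?thesis .
qed

lemma psdN: assumes "\<beta> \<ge> 0" shows "psd (N \<beta>)"
  unfolding psd_def
proof
  fix w :: "real^'d"
  have "w \<bullet> (N \<beta> *v w) = w \<bullet> (A *v w) + \<beta> * (w \<bullet> (B *v w))"
    by (simp add: N_def matrix_vector_mult_add_rdistrib inner_add_right
         scaleR_matrix_vector_assoc[symmetric])
  moreover have "0 \<le> w \<bullet> (A *v w)" "0 \<le> w \<bullet> (B *v w)"
    using psdA psdB psd_def by auto
  ultimately show "0 \<le> w \<bullet> (N \<beta> *v w)" using assms by simp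
qed

lemma trN: assumes "\<beta> \<ge> 0" "psd M" shows "0 \<le> trace (N \<beta> ** M)"
proof -
  have "trace (N \<beta> ** M) = trace (A ** M) + \<beta> * trace (B ** M)"
    by (simp add: N_def mm_add_r mm_scale_l trace_add trace_scale)
  then show ?thesis using trA[OF assms(2)] trB[OF assms(2)] assms(1) by simp
qed

lemma psdR: assumes "\<beta> > 0" shows "psd (R \<beta>)"
  unfolding psd_def
proof
  fix w :: "real^'d"
  define u where "u = R \<beta> *v w"
  have "w = N \<beta> *v u" unfolding u_def
    by (simp add: matrix_vector_mul_assoc NR_RN[OF assms])
  then have "w \<bullet> (R \<beta> *v w) = u \<bullet> (N \<beta> *v u)"
    by (simp add: u_def inner_commute)
  then show "0 \<le> w \<bullet> (R \<beta> *v w)"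
    using psdN[of \<beta>] assms psd_def by auto
qed

lemma trR: assumes "\<beta> > 0" "psd M" shows "0 \<le> trace (R \<beta> ** M)"
proof -
  have "trace (R \<beta> ** M) = trace (R \<beta> ** (N \<beta> ** R \<beta> ** M))"
    by (simp add: NR_RN[OF assms(1)] matrix_mul_assoc)
  also have "\<dots> = trace ((N \<beta> ** R \<beta> ** M) ** R \<beta>)"
    by (rule trace_mul_sym)
  also have "\<dots> = trace (N \<beta> ** (transpose (R \<beta>) ** M ** R \<beta>))"
    by (simp add: symR[OF assms(1)] matrix_mul_assoc)
  finally show ?thesis
    using trN[of \<beta> "transpose (R \<beta>) ** M ** R \<beta>"] psd_congr[OF assms(2), of "R \<beta>"] assms(1) by simp
qed

lemma h_alt: assumes "\<beta> > 0" shows "h \<beta> = real CARD('d) - trace (A ** R \<beta>)"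
proof -
  have "\<beta> *\<^sub>R B = N \<beta> - A" by (simp add: N_def)
  then have "h \<beta> = trace ((N \<beta> - A) ** R \<beta>)" by (simp add: h_def R_def N_def)
  also have "\<dots> = trace (mat 1 - A ** R \<beta>)" by (simp add: mm_diff_r NR_RN[OF assms])
  finally show ?thesis by (simp add: trace_sub trace_I)
qed

lemma res1: assumes "\<beta> > 0" "\<gamma> > 0"
  shows "R \<beta> - R \<gamma> = (\<gamma> - \<beta>) *\<^sub>R (R \<beta> ** B ** R \<gamma>)"
proof -
  have "R \<beta> - R \<gamma> = R \<beta> ** (N \<gamma> ** R \<gamma>) - (R \<beta> ** N \<beta>) ** R \<gamma>"
    using NR_RN assms by simp
  also have "\<dots> = R \<beta> ** (N \<gamma> - N \<beta>) ** R \<gamma>"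
    by (simp add: mm_diff_l mm_diff_r matrix_mul_assoc)
  also have "N \<gamma> - N \<beta> = (\<gamma> - \<beta>) *\<^sub>R B"
    by (simp add: N_def scaleR_diff_left)
  finally show ?thesis by (simp add: mm_scale_l mm_scale_r)
qed

lemma res2: assumes "\<beta> > 0" "\<gamma> > 0"
  shows "R \<beta> - R \<gamma> = (\<gamma> - \<beta>) *\<^sub>R (R \<gamma> ** B ** R \<beta>)"
proof -
  have "R \<gamma> - R \<beta> = (\<beta> - \<gamma>) *\<^sub>R (R \<gamma> ** B ** R \<beta>)" by (rule res1[OF assms(2,1)])
  then have "R \<beta> - R \<gamma> = - ((\<beta> - \<gamma>) *\<^sub>R (R \<gamma> ** B ** R \<beta>))"
    by (metis minus_diff_eq)
  then show ?thesis by (simp add: scaleR_diff_left)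
qed

lemma hdiff: assumes "\<beta> > 0" "\<gamma> > 0"
  shows "h \<gamma> - h \<beta> = (\<gamma> - \<beta>) * trace (A ** (R \<beta> ** B ** R \<gamma>))"
proof -
  have "h \<gamma> - h \<beta> = trace (A ** R \<beta>) - trace (A ** R \<gamma>)"
    using h_alt assms by simp
  also have "\<dots> = trace (A ** (R \<beta> - R \<gamma>))" by (simp add: mm_diff_l trace_sub)
  finally show ?thesis by (simp add: res1[OF assms] mm_scale_r trace_scale)
qed

end



context AB begin

lemma main_ineq:
  assumes a0: "0 < \<alpha>" and aa: "\<alpha> \<le> \<alpha>'"
  defines "d0 \<equiv> trace (A ** (R \<alpha> ** B ** R \<alpha>))"
  shows "(\<alpha> / \<alpha>') * (\<alpha>' - \<alpha>) * d0 \<le> h \<alpha>' - h \<alpha> \<and> h \<alpha>' - h \<alpha> \<le> (\<alpha>' - \<alpha>) * d0"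
proof -
  have a1: "0 < \<alpha>'" using a0 aa by simp
  define R0 where "R0 = R \<alpha>"
  define R1 where "R1 = R \<alpha>'"
  define t where "t = \<alpha>' - \<alpha>"
  have t0: "0 \<le> t" using aa t_def by simp
  define c where "c = trace (A ** (R0 ** B ** R1))"
  define e where "e = trace (A ** (R0 ** B ** (R1 ** B ** R0)))"
  have hd: "h \<alpha>' - h \<alpha> = t * c" unfolding t_def c_def R0_def R1_def by (rule hdiff[OF a0 a1])
  have r2: "R0 - R1 = t *\<^sub>R (R1 ** B ** R0)" unfolding R0_def R1_def t_def by (rule res2[OF a0 a1])
  have sR0: "transpose R0 = R0" unfolding R0_def using symR a0 by simp
  have sR1: "transpose R1 = R1" unfolding R1_def using symR a1 by simp
  have pR1: "psd R1" unfolding R1_def using psdR a1 by simp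
  have E1: "d0 - c = t * e"
  proof -
    have "d0 - c = trace (A ** (R0 ** B ** (R0 - R1)))"
      by (simp add: d0_def c_def R0_def R1_def mm_diff_l trace_sub)
    also have "\<dots> = t * e" by (simp add: r2 e_def mm_scale_r trace_scale)
    finally show ?thesis .
  qed
  have e0: "0 \<le> e"
  proof -
    have "psd (transpose (B ** R0) ** R1 ** (B ** R0))" by (rule psd_congr[OF pR1])
    moreover have "transpose (B ** R0) ** R1 ** (B ** R0) = R0 ** B ** (R1 ** B ** R0)"
      by (simp add: matrix_transpose_mul sR0 symB matrix_mul_assoc)
    ultimately show ?thesis unfolding e_def using trA by simp
  qed
  have I: "A ** R0 = mat 1 - \<alpha> *\<^sub>R (B ** R0)"
  proof -
    have "(A + \<alpha> *\<^sub>R B) ** R0 = mat 1" using NR_RN(1)[OF a0] by (simp add: N_def R0_def)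
    then have "A ** R0 + \<alpha> *\<^sub>R (B ** R0) = mat 1" by (simp add: mm_add_r mm_scale_l)
    then show ?thesis by (simp add: eq_diff_eq)
  qed
  define S where "S = A ** R0 ** A"
  have pS: "psd S"
    using psd_congr[OF psdR[OF a0], of A] by (simp add: S_def symA R0_def)
  have E2: "c - \<alpha> * e = trace ((R0 ** B ** R1) ** S)"
  proof -
    have "c - \<alpha> * e = trace (A ** (R0 ** B ** R1 ** (mat 1 - \<alpha> *\<^sub>R (B ** R0))))"
      by (simp add: c_def e_def mm_diff_l mm_scale_r trace_sub trace_scale matrix_mul_assoc)
    also have "\<dots> = trace (A ** (R0 ** B ** R1 ** (A ** R0)))" by (simp add: I)
    also have "\<dots> = trace ((R0 ** B ** R1 ** (A ** R0)) ** A)" by (rule trace_mul_sym)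
    also have "\<dots> = trace ((R0 ** B ** R1) ** S)" by (simp add: S_def matrix_mul_assoc)
    finally show ?thesis .
  qed
  have E4: "R0 ** B ** R1 = R1 ** B ** R1 + t *\<^sub>R (R1 ** B ** R0 ** B ** R1)"
  proof -
    have "R0 = R1 + t *\<^sub>R (R1 ** B ** R0)" using r2 by (metis add.commute diff_eq_eq)
    then have "R0 ** B ** R1 = (R1 + t *\<^sub>R (R1 ** B ** R0)) ** B ** R1" by simp
    also have "\<dots> = R1 ** B ** R1 + t *\<^sub>R (R1 ** B ** R0 ** B ** R1)"
      by (simp add: mm_add_r mm_scale_l)
    finally show ?thesis .
  qed
  have T1: "0 \<le> trace ((R1 ** B ** R1) ** S)"
  proof -
    have "trace ((R1 ** B ** R1) ** S) = trace (R1 ** (B ** R1 ** S))" by (simp add: matrix_mul_assoc)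
    also have "\<dots> = trace ((B ** R1 ** S) ** R1)" by (rule trace_mul_sym)
    also have "\<dots> = trace (B ** (transpose R1 ** S ** R1))" by (simp add: sR1 matrix_mul_assoc)
    finally show ?thesis using trB[OF psd_congr[OF pS, of R1]] by simp
  qed
  have T2: "0 \<le> trace ((R1 ** B ** R0 ** B ** R1) ** S)"
  proof -
    have "trace ((R1 ** B ** R0 ** B ** R1) ** S) = trace ((R1 ** B) ** (R0 ** B ** R1 ** S))"
      by (simp add: matrix_mul_assoc)
    also have "\<dots> = trace ((R0 ** B ** R1 ** S) ** (R1 ** B))" by (rule trace_mul_sym)
    also have "\<dots> = trace (R \<alpha> ** (transpose (R1 ** B) ** S ** (R1 ** B)))"
      by (simp add: matrix_transpose_mul sR1 symB matrix_mul_assoc R0_def)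
    finally show ?thesis using trR[OF a0 psd_congr[OF pS, of "R1 ** B"]] by simp
  qed
  have ce: "\<alpha> * e \<le> c"
  proof -
    have "c - \<alpha> * e = trace ((R1 ** B ** R1) ** S) + t * trace ((R1 ** B ** R0 ** B ** R1) ** S)"
      by (simp add: E2 E4 mm_add_r mm_scale_l trace_add trace_scale)
    then show ?thesis using T1 T2 t0 by (smt (verit) mult_nonneg_nonneg)
  qed
  have up: "h \<alpha>' - h \<alpha> \<le> (\<alpha>' - \<alpha>) * d0"
    using hd E1 e0 t0 unfolding t_def[symmetric] by (smt (verit) mult_left_mono mult_nonneg_nonneg)
  have key: "\<alpha> * d0 \<le> \<alpha>' * c"
  proof -
    have "\<alpha> * d0 = \<alpha> * c + t * (\<alpha> * e)" using E1 by (simp add: algebra_simps)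
    also have "\<dots> \<le> \<alpha> * c + t * c" using ce t0 by (simp add: mult_left_mono)
    also have "\<dots> = \<alpha>' * c" by (simp add: t_def algebra_simps)
    finally show ?thesis .
  qed
  have "(\<alpha> / \<alpha>') * (\<alpha>' - \<alpha>) * d0 = t * ((\<alpha> * d0) / \<alpha>')" by (simp add: t_def)
  also have "\<dots> \<le> t * c"
    using key a1 t0 by (intro mult_left_mono) (simp_all add: divide_le_eq mult.commute)
  finally show ?thesis using up hd by simp
qed

end



context AB begin

lemma R_entry: assumes "\<beta> > 0"
  shows "R \<beta> $ k $ j = det (\<chi> i l. if l = k then (\<chi> i. if i = j then 1 else 0) $ i else N \<beta> $ i $ l) / det (N \<beta>)"
proof -
  have d: "det (N \<beta>) \<noteq> 0" using invN[OF assms] invertible_det_nz N_def by metis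
  have "N \<beta> *v (\<chi> k. R \<beta> $ k $ j) = (\<chi> i. (N \<beta> ** R \<beta>) $ i $ j)"
    by (simp add: matrix_vector_mult_def matrix_matrix_mult_def vec_eq_iff)
  also have "\<dots> = (\<chi> i. if i = j then 1 else 0)" by (simp add: NR_RN[OF assms] mat_def)
  finally have "(\<chi> k. R \<beta> $ k $ j) = (\<chi> k. det (\<chi> i l. if l = k then (\<chi> i. if i = j then 1 else 0) $ i else N \<beta> $ i $ l) / det (N \<beta>))"
    using cramer[OF d] by blast
  then have "(\<chi> k. R \<beta> $ k $ j) $ k = (\<chi> k. det (\<chi> i l. if l = k then (\<chi> i. if i = j then 1 else 0) $ i else N \<beta> $ i $ l) / det (N \<beta>)) $ k"
    by (rule arg_cong)
  then show ?thesis by simp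
qed

lemma R_cont: assumes "\<alpha> > 0" shows "isCont (\<lambda>\<gamma>. R \<gamma> $ k $ j) \<alpha>"
proof -
  define F where "F = (\<lambda>\<gamma>. det (\<chi> i l. if l = k then (\<chi> i. if i = j then 1 else 0) $ i else N \<gamma> $ i $ l) / det (N \<gamma>))"
  have ev: "eventually (\<lambda>\<gamma>. R \<gamma> $ k $ j = F \<gamma>) (nhds \<alpha>)"
  proof -
    have "eventually (\<lambda>\<gamma>. \<gamma> \<in> {0<..}) (nhds \<alpha>)"
      using assms by (intro eventually_nhds_in_open) auto
    then show ?thesis by eventually_elim (simp add: F_def R_entry)
  qed
  have Ne: "N \<gamma> $ i $ l = A $ i $ l + \<gamma> * B $ i $ l" for \<gamma> i l by (simp add: N_def)
  have c1: "isCont (\<lambda>\<gamma>. det (\<chi> i l. if l = k then (\<chi> i. if i = j then 1 else 0) $ i else N \<gamma> $ i $ l)) \<alpha>"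
    apply (rule cont_det)
    subgoal for i l by (cases "l = k") (auto simp: Ne intro!: continuous_intros)
    done
  have c2: "isCont (\<lambda>\<gamma>. det (N \<gamma>)) \<alpha>"
    by (rule cont_det) (auto simp: Ne intro!: continuous_intros)
  have d: "det (N \<alpha>) \<noteq> 0" using invN[OF assms] invertible_det_nz N_def by metis
  have "isCont F \<alpha>" unfolding F_def using c1 c2 d by (intro continuous_intros) auto
  then show ?thesis using isCont_cong[OF ev] by simp
qed

lemma g_cont: assumes "\<alpha> > 0" shows "isCont (\<lambda>\<gamma>. trace (C ** R \<gamma>)) \<alpha>"
proof -
  have "(\<lambda>\<gamma>. trace (C ** R \<gamma>)) = (\<lambda>\<gamma>. \<Sum>i\<in>UNIV. \<Sum>k\<in>UNIV. C $ i $ k * R \<gamma> $ k $ i)"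
    by (simp add: trace_def matrix_matrix_mult_def)
  moreover have "isCont (\<lambda>\<gamma>. \<Sum>i\<in>UNIV. \<Sum>k\<in>UNIV. C $ i $ k * R \<gamma> $ k $ i) \<alpha>"
    by (intro continuous_intros R_cont assms)
  ultimately show ?thesis by simp
qed

lemma h_deriv: assumes a0: "\<alpha> > 0"
  shows "(h has_field_derivative trace (A ** (R \<alpha> ** B ** R \<alpha>))) (at \<alpha>)"
proof -
  define g where "g = (\<lambda>\<gamma>. trace ((A ** (R \<alpha> ** B)) ** R \<gamma>))"
  have gc: "isCont g \<alpha>" unfolding g_def by (rule g_cont[OF a0])
  have lim: "(g \<longlongrightarrow> g \<alpha>) (at \<alpha>)" using gc isCont_def by blast
  have ev: "eventually (\<lambda>y. g y = (h y - h \<alpha>) / (y - \<alpha>)) (at \<alpha>)"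
  proof -
    have "eventually (\<lambda>y. y \<in> {0<..}) (nhds \<alpha>)"
      using a0 by (intro eventually_nhds_in_open) auto
    then have "eventually (\<lambda>y. y \<in> {0<..}) (at \<alpha>)"
      by (simp add: eventually_at_filter eventually_mono)
    moreover have "eventually (\<lambda>y. y \<noteq> \<alpha>) (at \<alpha>)" by (simp add: eventually_at_filter)
    ultimately show ?thesis
    proof eventually_elim
      case (elim y)
      then have "h y - h \<alpha> = (y - \<alpha>) * g y"
        using hdiff[OF a0, of y] by (simp add: g_def matrix_mul_assoc)
      then show ?case using elim by simp
    qed
  qed
  have "((\<lambda>y. (h y - h \<alpha>) / (y - \<alpha>)) \<longlongrightarrow> g \<alpha>) (at \<alpha>)"
    by (rule Lim_transform_eventually[OF lim ev])
  then have "(h has_field_derivative g \<alpha>) (at \<alpha>)" by (simp add: has_field_derivative_iff)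
  then show ?thesis by (simp add: g_def matrix_mul_assoc)
qed

end



lemma fac_psd:
  fixes U :: "real^'n^'d"
  assumes "\<forall>i\<in>S. 0 \<le> z$i"
  shows "psd (U ** restr_diag S z ** transpose U)"
  unfolding psd_def quad_fac using assms by (auto intro!: sum_nonneg)

lemma fac_zero:
  fixes U :: "real^'n^'d"
  assumes "\<forall>i. 0 < z$i" and "w \<bullet> ((U ** restr_diag S z ** transpose U) *v w) = 0" and "i \<in> S"
  shows "(transpose U *v w) $ i = 0"
proof -
  have nn: "\<forall>i\<in>UNIV. 0 \<le> (if i \<in> S then z$i else 0) * ((transpose U *v w)$i)^2"
    using assms(1) by (simp add: less_imp_le)
  have "\<forall>i\<in>UNIV. (if i \<in> S then z$i else 0) * ((transpose U *v w)$i)^2 = 0"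
    using assms(2) nn unfolding quad_fac by (subst (asm) sum_nonneg_eq_0_iff) auto
  then show ?thesis using assms(1,3) by (metis UNIV_I mult_eq_0_iff order_less_irrefl power_eq_0_iff)
qed

theorem claim2p18:
  fixes U :: "real^'n^'d" and z :: "real^'n" and T :: "'n set" and \<alpha> \<alpha>' :: real
  assumes "frame U"
    and "\<forall>i. z $ i > 0"
    and "1 \<le> \<alpha>" and "\<alpha> \<le> \<alpha>'"
  defines "h \<equiv> progress U z T"
  shows "(\<alpha> / \<alpha>') * (\<alpha>' - \<alpha>) * deriv h \<alpha> \<le> h \<alpha>' - h \<alpha>
         \<and> h \<alpha>' - h \<alpha> \<le> (\<alpha>' - \<alpha>) * deriv h \<alpha>"
proof -
  define A where "A = U ** restr_diag (- T) z ** transpose U"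
  define B where "B = U ** restr_diag T z ** transpose U"
  have z0: "\<forall>i\<in>S. 0 \<le> z$i" for S using assms(2) less_imp_le by blast
  have injU: "inj ((*v) (transpose U))"
    using assms(1) unfolding frame_def
    by (simp add: full_rank_injective[symmetric] rank_transpose)
  have ab: "AB A B"
  proof
    show "transpose A = A" unfolding A_def by (rule fac_sym)
    show "transpose B = B" unfolding B_def by (rule fac_sym)
    show "0 \<le> trace (A ** M)" if "psd M" for M unfolding A_def by (rule fac_trace[OF z0 that])
    show "0 \<le> trace (B ** M)" if "psd M" for M unfolding B_def by (rule fac_trace[OF z0 that])
    show pA: "psd A" unfolding A_def by (rule fac_psd[OF z0])
    show pB: "psd B" unfolding B_def by (rule fac_psd[OF z0])
    show "invertible (A + \<beta> *\<^sub>R B)" if b0: "\<beta> > 0" for \<beta>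
    proof -
      have "\<forall>w. (A + \<beta> *\<^sub>R B) *v w = 0 \<longrightarrow> w = 0"
      proof (intro allI impI)
        fix w :: "real^'d"
        assume "(A + \<beta> *\<^sub>R B) *v w = 0"
        then have "w \<bullet> ((A + \<beta> *\<^sub>R B) *v w) = 0" by simp
        then have s: "w \<bullet> (A *v w) + \<beta> * (w \<bullet> (B *v w)) = 0"
          by (simp add: matrix_vector_mult_add_rdistrib inner_add_right
              scaleR_matrix_vector_assoc[symmetric])
        have qa: "0 \<le> w \<bullet> (A *v w)" "0 \<le> w \<bullet> (B *v w)" using pA pB psd_def by auto
        have "w \<bullet> (A *v w) = 0" "w \<bullet> (B *v w) = 0"
          using s qa b0 by (smt (verit) mult_pos_pos mult_nonneg_nonneg)+
        then have "(transpose U *v w) $ i = 0" for i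
          using fac_zero[OF assms(2), where U=U and S="- T" and w=w and i=i] fac_zero[OF assms(2), where U=U and S=T and w=w and i=i]
          unfolding A_def B_def by (cases "i \<in> T") auto
        then have "transpose U *v w = transpose U *v 0" by (simp add: vec_eq_iff)
        then show "w = 0" using injU by (meson injD)
      qed
      then show ?thesis
        by (simp add: invertible_left_inverse matrix_left_invertible_ker)
    qed
  qed
  have hh: "h = AB.h A B"
  proof (rule ext)
    fix \<beta>
    show "h \<beta> = AB.h A B \<beta>"
      unfolding AB.h_def[OF ab] unfolding h_def progress_def A_def B_def ..
  qed
  have a0: "0 < \<alpha>" using assms(3) by simp
  have "deriv h \<alpha> = trace (A ** (AB.R A B \<alpha> ** B ** AB.R A B \<alpha>))"
    unfolding hh by (rule DERIV_imp_deriv[OF AB.h_deriv[OF ab a0]])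
  then show ?thesis unfolding hh using AB.main_ineq[OF ab a0 assms(4)] by simp
qed



end
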